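(* Let $P$ be a program in normal form over a propositional signature $\Sigma$, and $q\in\Sigma$. If $P$ is $q$-forgettable, then $\langle P,\{q\}\rangle$ does not satisfy criterion $\Omega$.
   Context: A program over $\Sigma$ is a finite set of rules $r$ of the form $a_1\vee\dots\vee a_k\leftarrow b_1,\dots,b_l,\ not\,c_1,\dots,not\,c_m,\ not\,not\,d_1,\dots,not\,not\,d_n$ with atoms in $\Sigma$; write $H(r)=\{a_i\}$, $B^+(r)=\{b_i\}$, $B^-(r)=\{c_i\}$, $B^{--}(r)=\{d_i\}$, $B(r)=B^+(r)\cup\{not\,c: c\in B^-(r)\}\cup\{not\,not\,d:d\in B^{--}(r)\}$. $\Sigma(r)$, $\Sigma(P)$ are the atoms occurring in $r$, $P$. Reduct: $P^I=\{H(r)\leftarrow B^+(r): r\in P, B^-(r)\cap I=\emptyset, B^{--}(r)\subseteq I\}$. $I$ classically satisfies $r$ if $B^+(r)\subseteq I$, $B^-(r)\cap I=\emptyset$, $B^{--}(r)\subseteq I$ imply $H(r)\cap I\ne\emptyset$. An HT-interpretation $\langle X,Y\rangle$ ($X\subseteq Y$) is an HT-model of $P$ if $Y$ classically satisfies all rules of $P$ and $X$ all rules of $P^Y$; $\mathcal{HT}(P)$ is the set of HT-models with $X,Y\subseteq\Sigma(P)$. Normal form: $P$ is in normal form if (i) for every atom $a$ and $r\in P$ at most one of $a$, $not\,a$, $not\,not\,a$ is in $B(r)$; (ii) if $a\in H(r)$ then neither $a$ nor $not\,a$ is in $B(r)$; (iii) there are no $r,r'\in P$ with ($H(r')\subseteq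 H(r)$ and $B(r')\subsetneq B(r)$) or ($H(r')\subsetneq H(r)$ and $B(r')\subseteq B(r)$). A self-cycle on $q$ is a rule $r$ with $q\in H(r)$ and $q\in B^{--}(r)$. A program $P$ in normal form is $q$-forgettable if at least one holds: (a) every rule of $P$ in which $q$ occurs is a self-cycle on $q$; (b) $P$ contains the fact $q\leftarrow$ (the rule with head $\{q\}$ and empty body); (c) $P$ contains no self-cycle on $q$. Criterion $\Omega$: for a program $P$, $V\subseteq\Sigma$, $Y\subseteq\Sigma\setminus V$, $A\subseteq V$, let $R^{Y,A}=\{X\setminus V:\langle X,Y\cup A\rangle\in\mathcal{HT}(P)\}$, $Rel^Y=\{A\subseteq V:\langle Y\cup A,Y\cup A\rangle\in\mathcal{HT}(P)$ and no $A'\subsetneq A$ has $\langle Y\cup A',Y\cup A\rangle\in\mathcal{HT}(P)\}$, $\mathcal{R}^Y=\{R^{Y,A}:A\in Rel^Y\}$. $\langle P,V\rangle$ satisfies $\Omega$ if there is $Y\subseteq\Sigma\setminus V$ such that $\mathcal{R}^Y$ is non-empty and has no least element with respect to $\subseteq$. *)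

theory Defs
  imports Main
begin

(* A rule  a1 v ... v ak <- b1,...,bl, not c1,..., not cm, not not d1, ..., not not dn *)
record 'a rule =
  H   :: "'a set"
  Bp  :: "'a set"
  Bn  :: "'a set"
  Bnn :: "'a set"

datatype 'a lit = LPos 'a | LNot 'a | LNotNot 'a

definition body :: "'a rule \<Rightarrow> 'a lit set" where
  "body r = LPos ` Bp r \<union> LNot ` Bn r \<union> LNotNot ` Bnn r"

definition atoms_rule :: "'a rule \<Rightarrow> 'a set" where
  "atoms_rule r = H r \<union> Bp r \<union> Bn r \<union> Bnn r"

definition atoms_prog :: "'a rule set \<Rightarrow> 'a set" where
  "atoms_prog P = (\<Union>r\<in>P. atoms_rule r)"

definition is_program :: "'a set \<Rightarrow> 'a rule set \<Rightarrow> bool" where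
  "is_program Sig P \<longleftrightarrow> finite P \<and>
     (\<forall>r\<in>P. finite (H r) \<and> finite (Bp r) \<and> finite (Bn r) \<and> finite (Bnn r)) \<and>
     atoms_prog P \<subseteq> Sig"

definition reduct :: "'a rule set \<Rightarrow> 'a set \<Rightarrow> ('a set \<times> 'a set) set" where
  "reduct P I = {(H r, Bp r) | r. r \<in> P \<and> Bn r \<inter> I = {} \<and> Bnn r \<subseteq> I}"

definition sat_rule :: "'a set \<Rightarrow> 'a rule \<Rightarrow> bool" where
  "sat_rule I r \<longleftrightarrow>
     (Bp r \<subseteq> I \<and> Bn r \<inter> I = {} \<and> Bnn r \<subseteq> I \<longrightarrow> H r \<inter> I \<noteq> {})"

definition sat_pos :: "'a set \<Rightarrow> ('a set \<times> 'a set) \<Rightarrow> bool" where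
  "sat_pos I hb \<longleftrightarrow> (snd hb \<subseteq> I \<longrightarrow> fst hb \<inter> I \<noteq> {})"

definition HT :: "'a rule set \<Rightarrow> ('a set \<times> 'a set) set" where
  "HT P = {(X, Y). X \<subseteq> Y \<and> Y \<subseteq> atoms_prog P \<and>
                   (\<forall>r\<in>P. sat_rule Y r) \<and> (\<forall>hb\<in>reduct P Y. sat_pos X hb)}"

definition normal_form :: "'a rule set \<Rightarrow> bool" where
  "normal_form P \<longleftrightarrow>
     (\<forall>r\<in>P. \<forall>a. card ({LPos a, LNot a, LNotNot a} \<inter> body r) \<le> 1) \<and>
     (\<forall>r\<in>P. \<forall>a\<in>H r. LPos a \<notin> body r \<and> LNot a \<notin> body r) \<and>
     \<not> (\<exists>r\<in>P. \<exists>r'\<in>P.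
          (H r' \<subseteq> H r \<and> body r' \<subset> body r) \<or> (H r' \<subset> H r \<and> body r' \<subseteq> body r))"

definition self_cycle :: "'a \<Rightarrow> 'a rule \<Rightarrow> bool" where
  "self_cycle q r \<longleftrightarrow> q \<in> H r \<and> q \<in> Bnn r"

definition forgettable :: "'a rule set \<Rightarrow> 'a \<Rightarrow> bool" where
  "forgettable P q \<longleftrightarrow> normal_form P \<and>
     ((\<forall>r\<in>P. q \<in> atoms_rule r \<longrightarrow> self_cycle q r) \<or>
      \<lparr>H = {q}, Bp = {}, Bn = {}, Bnn = {}\<rparr> \<in> P \<or>
      (\<forall>r\<in>P. \<not> self_cycle q r))"

definition RYA :: "'a rule set \<Rightarrow> 'a set \<Rightarrow> 'a set \<Rightarrow> 'a set \<Rightarrow> 'a set set" where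
  "RYA P V Y A = {X - V | X. (X, Y \<union> A) \<in> HT P}"

definition Rel :: "'a rule set \<Rightarrow> 'a set \<Rightarrow> 'a set \<Rightarrow> 'a set set" where
  "Rel P V Y = {A. A \<subseteq> V \<and> (Y \<union> A, Y \<union> A) \<in> HT P \<and>
                   \<not> (\<exists>A'. A' \<subset> A \<and> (Y \<union> A', Y \<union> A) \<in> HT P)}"

definition RY :: "'a rule set \<Rightarrow> 'a set \<Rightarrow> 'a set \<Rightarrow> 'a set set set" where
  "RY P V Y = {RYA P V Y A | A. A \<in> Rel P V Y}"

definition Omega :: "'a set \<Rightarrow> 'a rule set \<Rightarrow> 'a set \<Rightarrow> bool" where
  "Omega Sig P V \<longleftrightarrow> (\<exists>Y. Y \<subseteq> Sig - V \<and> RY P V Y \<noteq> {} \<and>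
       \<not> (\<exists>R\<in>RY P V Y. \<forall>R'\<in>RY P V Y. R \<subseteq> R'))"

end

theory Submission
  imports Defs
begin

lemma key:
  assumes forg: "forgettable P q" and qY: "q \<notin> Y"
    and r0: "{} \<in> Rel P {q} Y" and r1: "{q} \<in> Rel P {q} Y"
  shows "RYA P {q} Y {q} \<subseteq> RYA P {q} Y {}"
proof -
  have h0: "(Y, Y) \<in> HT P" using r0 by (simp add: Rel_def)
  have h1: "(Y \<union> {q}, Y \<union> {q}) \<in> HT P" and n1: "(Y, Y \<union> {q}) \<notin> HT P"
    using r1 by (auto simp: Rel_def)
  have satY: "\<forall>r\<in>P. sat_rule Y r" and Yat: "Y \<subseteq> atoms_prog P"
    using h0 by (auto simp: HT_def)
  have satYq: "\<forall>r\<in>P. sat_rule (Y \<union> {q}) r" and Yqat: "Y \<union> {q} \<subseteq> atoms_prog P"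
    using h1 by (auto simp: HT_def)
  from forg have cases: "(\<forall>r\<in>P. q \<in> atoms_rule r \<longrightarrow> self_cycle q r) \<or>
      \<lparr>H = {q}, Bp = {}, Bn = {}, Bnn = {}\<rparr> \<in> P \<or>
      (\<forall>r\<in>P. \<not> self_cycle q r)" by (simp add: forgettable_def)
  show ?thesis
  proof (cases "\<lparr>H = {q}, Bp = {}, Bn = {}, Bnn = {}\<rparr> \<in> P")
    case True
    then have "sat_rule Y \<lparr>H = {q}, Bp = {}, Bn = {}, Bnn = {}\<rparr>" using satY by blast
    then have False using qY by (simp add: sat_rule_def)
    then show ?thesis ..
  next
    case nf: False
    show ?thesis
    proof (cases "\<forall>r\<in>P. \<not> self_cycle q r")
      case True
      have red: "\<forall>a b. (a, b) \<in> reduct P (insert q Y) \<longrightarrow> sat_pos Y (a, b)"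
        proof (intro allI impI)
          fix a b assume "(a, b) \<in> reduct P (insert q Y)"
          then obtain r where r: "r \<in> P" "a = H r" "b = Bp r" "Bn r \<inter> insert q Y = {}"
            "Bnn r \<subseteq> insert q Y" by (auto simp: reduct_def)
          show "sat_pos Y (a, b)"
          proof (cases "q \<in> Bnn r")
            case False
            then have "Bnn r \<subseteq> Y" using r by auto
            then show ?thesis using satY r by (auto simp: sat_rule_def sat_pos_def)
          next
            case qb: True
            then have "q \<notin> H r" using True r by (auto simp: self_cycle_def)
            then show ?thesis using satYq r by (auto simp: sat_rule_def sat_pos_def)
          qed
        qed
      have "(Y, Y \<union> {q}) \<in> HT P"
        unfolding HT_def using Yqat satYq red by auto
      then have False using n1 by simp
      then show ?thesis ..
    next
      case False
      then have ca: "\<forall>r\<in>P. q \<in> atoms_rule r \<longrightarrow> self_cycle q r" using cases nf by blast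
      show ?thesis
      proof
        fix Z assume "Z \<in> RYA P {q} Y {q}"
        then obtain X where X: "Z = X - {q}" "(X, Y \<union> {q}) \<in> HT P" by (auto simp: RYA_def)
          have sub: "X - {q} \<subseteq> Y" using X by (auto simp: HT_def)
          have red: "\<forall>a b. (a, b) \<in> reduct P Y \<longrightarrow> sat_pos (X - {q}) (a, b)"
          proof (intro allI impI)
            fix a b assume "(a, b) \<in> reduct P Y"
            then obtain r where r: "r \<in> P" "a = H r" "b = Bp r" "Bn r \<inter> Y = {}"
              "Bnn r \<subseteq> Y" by (auto simp: reduct_def)
            have "q \<notin> Bnn r" using r qY by auto
            then have nq: "q \<notin> atoms_rule r" using ca r by (auto simp: self_cycle_def)
            then have "(H r, Bp r) \<in> reduct P (Y \<union> {q})" using r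
              by (auto simp: reduct_def atoms_rule_def)
            then have "sat_pos X (H r, Bp r)" using X by (auto simp: HT_def)
            then show "sat_pos (X - {q}) (a, b)" using nq r
              by (auto simp: sat_pos_def atoms_rule_def)
          qed
        have "(X - {q}, Y) \<in> HT P"
          unfolding HT_def using sub Yat satY red by auto
        then have e: "(X - {q}, Y \<union> {}) \<in> HT P" by simp
        have "Z = (X - {q}) - {q}" using X(1) by auto
        then show "Z \<in> RYA P {q} Y {}" using e unfolding RYA_def by blast
      qed
    qed
  qed
qed

theorem theorem4:
  fixes Sig :: "'a set" and P :: "'a rule set" and q :: 'a
  assumes "is_program Sig P"
    and "normal_form P"
    and "q \<in> Sig"
    and "forgettable P q"
  shows "\<not> Omega Sig P {q}"
proof
  assume "Omega Sig P {q}"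
  then obtain Y where Y: "Y \<subseteq> Sig - {q}" "RY P {q} Y \<noteq> {}"
    and nl: "\<not> (\<exists>R\<in>RY P {q} Y. \<forall>R'\<in>RY P {q} Y. R \<subseteq> R')"
    by (auto simp: Omega_def)
  have qY: "q \<notin> Y" using Y by auto
  have relsub: "\<And>A. A \<in> Rel P {q} Y \<Longrightarrow> A = {} \<or> A = {q}"
    by (auto simp: Rel_def)
  show False
  proof (cases "{q} \<in> Rel P {q} Y")
    case True
    have "\<forall>R'\<in>RY P {q} Y. RYA P {q} Y {q} \<subseteq> R'"
    proof
      fix R' assume "R' \<in> RY P {q} Y"
      then obtain A where A: "R' = RYA P {q} Y A" "A \<in> Rel P {q} Y" by (auto simp: RY_def)
      show "RYA P {q} Y {q} \<subseteq> R'"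
        using relsub[OF A(2)] key[OF assms(4) qY _ True] A by auto
    qed
    moreover have "RYA P {q} Y {q} \<in> RY P {q} Y" using True by (auto simp: RY_def)
    ultimately show False using nl by blast
  next
    case False
    then have "\<forall>A\<in>Rel P {q} Y. A = {}" using relsub by blast
    then have "RY P {q} Y \<subseteq> {RYA P {q} Y {}}" by (auto simp: RY_def)
    then have "RY P {q} Y = {RYA P {q} Y {}}" using Y(2) by blast
    then show False using nl by auto
  qed
qed

end
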